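(* Let $\mathcal{V}$ be a subspace of $\mathbb{R}^n$ and let $V$ be a $k\times n$ real matrix whose row space is $\mathcal{V}$. If there is a centered ellipsoid in $\mathbb{R}^k$ passing through all columns of $V$, then for every $k'\times n$ real matrix $\tilde V$ whose row space is $\mathcal{V}$ there is a centered ellipsoid in $\mathbb{R}^{k'}$ passing through all columns of $\tilde V$.
   Context: A centered ellipsoid in $\mathbb{R}^k$ is described by a symmetric positive semidefinite $k\times k$ matrix $M$; it passes through (i.e. has on its boundary) a point $v\in\mathbb{R}^k$ if $v^TMv=1$. *)

theory Defs
  imports "HOL-Analysis.Analysis"
begin

definition centered_ellipsoid :: "real^'k^'k \<Rightarrow> bool" where
  "centered_ellipsoid M \<longleftrightarrow> transpose M = M \<and> (\<forall>x. 0 \<le> x \<bullet> (M *v x))"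

definition passes_through :: "real^'k^'k \<Rightarrow> real^'k \<Rightarrow> bool" where
  "passes_through M v \<longleftrightarrow> v \<bullet> (M *v v) = 1"

end

theory Submission
  imports Defs
begin

lemma quad_form:
  fixes B :: "real^'a^'b" and M :: "real^'b^'b"
  shows "x \<bullet> ((transpose B ** M ** B) *v x) = (B *v x) \<bullet> (M *v (B *v x))"
proof -
  have "(transpose B ** M ** B) *v x = transpose B *v (M *v (B *v x))"
    by (simp add: matrix_vector_mul_assoc matrix_mul_assoc)
  also have "\<dots> = (M *v (B *v x)) v* B" by simp
  finally have "x \<bullet> ((transpose B ** M ** B) *v x) = ((M *v (B *v x)) v* B) \<bullet> x" by (simp add: inner_commute)
  also have "\<dots> = (M *v (B *v x)) \<bullet> (B *v x)" by (rule dot_lmul_matrix)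
  finally show ?thesis by (simp add: inner_commute)
qed

lemma row_in_range:
  fixes Vt :: "real^'n^'k2"
  shows "span (rows Vt) \<subseteq> range (\<lambda>x. transpose Vt *v x)"
proof (rule span_minimal)
  show "rows Vt \<subseteq> range (\<lambda>x. transpose Vt *v x)"
  proof
    fix r assume "r \<in> rows Vt"
    then obtain j where r: "r = row j Vt" by (auto simp: rows_def)
    have "transpose Vt *v axis j 1 = r"
      unfolding r by (simp add: vec_eq_iff matrix_vector_mult_def transpose_def row_def axis_def
          if_distrib cong: if_cong)
    then show "r \<in> range (\<lambda>x. transpose Vt *v x)" by (metis rangeI)
  qed
  show "subspace (range (\<lambda>x. transpose Vt *v x))"
    by (rule linear_subspace_image[OF matrix_vector_mul_linear subspace_UNIV])
qed

theorem lemma2p4: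
  fixes \<V> :: "(real^'n) set"
    and V :: "real^'n^'k"
    and Vt :: "real^'n^'k2"
  assumes "subspace \<V>"
    and "span (rows V) = \<V>"
    and "span (rows Vt) = \<V>"
    and "\<exists>M::real^'k^'k. centered_ellipsoid M \<and> (\<forall>v\<in>columns V. passes_through M v)"
  shows "\<exists>M::real^'k2^'k2. centered_ellipsoid M \<and> (\<forall>v\<in>columns Vt. passes_through M v)"
proof -
  obtain M :: "real^'k^'k" where M: "centered_ellipsoid M" "\<forall>v\<in>columns V. passes_through M v"
    using assms(4) by blast
  have "\<forall>i. \<exists>x. transpose Vt *v x = V $ i"
  proof
    fix i
    have "V $ i \<in> span (rows V)" by (rule span_base) (auto simp: rows_def row_def)
    then have Vi: "V $ i \<in> span (rows Vt)" using assms(2,3) by simp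
    then show "\<exists>x. transpose Vt *v x = V $ i" proof -
      from subsetD[OF row_in_range[of Vt] Vi] obtain x where "V $ i = transpose Vt *v x"
        by (auto simp del: transpose_matrix_vector)
      then show ?thesis by metis
    qed
  qed
  then obtain b where b: "\<And>i. transpose Vt *v b i = V $ i" by metis
  define B :: "real^'k2^'k" where "B = (\<chi> i. b i)"
  have BV: "\<And>j. B *v column j Vt = column j V"
  proof -
    fix j
    show "B *v column j Vt = column j V"
    proof (subst vec_eq_iff, rule allI)
      fix i
      have "V $ i $ j = (transpose Vt *v b i) $ j" using b by simp
      also have "\<dots> = (\<Sum>l\<in>UNIV. b i $ l * Vt $ l $ j)"
        by (simp add: matrix_vector_mult_def transpose_def mult.commute)
      finally show "(B *v column j Vt) $ i = column j V $ i"
        by (simp add: B_def matrix_vector_mult_def column_def)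
    qed
  qed
  define M' where "M' = transpose B ** M ** B"
  have "centered_ellipsoid M'"
    using M(1) unfolding centered_ellipsoid_def M'_def
    by (simp add: quad_form matrix_transpose_mul matrix_mul_assoc)
  moreover have "\<forall>v\<in>columns Vt. passes_through M' v"
  proof
    fix v assume "v \<in> columns Vt"
    then obtain j where v: "v = column j Vt" by (auto simp: columns_def)
    have "column j V \<in> columns V" by (auto simp: columns_def)
    then show "passes_through M' v"
      using M(2) BV unfolding passes_through_def M'_def v quad_form by simp
  qed
  ultimately show ?thesis by blast
qed

end
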